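(* Let $f$ be a regular planar discrete curve and $\mathfrak{q}\ne 0$ a space form vector with $\mathfrak{q}\perp\mathfrak{p}$, determining the space form $\mathcal{Q}$. The following are equivalent: (i) $f$ has constant arc-length in $\mathcal{Q}$; (ii) $\mathfrak{f}_i\langle\mathfrak{f}_k,\mathfrak{f}_j\rangle-\mathfrak{f}_k\langle\mathfrak{f}_i,\mathfrak{f}_j\rangle\perp\mathfrak{q}$ for all consecutive vertices $i,j,k$; (iii) the quantity $\frac{\langle\mathfrak{f}_i,\mathfrak{f}_j\rangle}{\langle\mathfrak{f}_i,\mathfrak{q}\rangle\langle\mathfrak{f}_j,\mathfrak{q}\rangle}$ is the same constant $\chi\in\mathbb{R}$ for all edges $(ij)$; (iv) there exists a circle congruence $a\in\mathcal{P}^\pm$ with $\mathfrak{a}_j\in\mathrm{span}\{\mathfrak{f}_j,\mathfrak{q},\mathfrak{p}\}$ for all $j$.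
   Context: Planar light cone model: $\mathbb{R}^{3,2}$ with form of signature $(3,2)$, light cone $\mathcal{L}$; fixed $\mathfrak{p}$ with $\langle\mathfrak{p},\mathfrak{p}\rangle=-1$; $v$ with $\langle\mathfrak{v},\mathfrak{p}\rangle=0$ are points of $\mathbb{R}^2\cup\{\infty\}$, others oriented circles/lines; incidence = orthogonality. A space form vector $\mathfrak{q}\perp\mathfrak{p}$ determines a space form $\mathcal{Q}$ of constant curvature $-\langle\mathfrak{q},\mathfrak{q}\rangle$ (Euclidean if $\langle\mathfrak{q},\mathfrak{q}\rangle=0$, hyperbolic if $>0$ with boundary given by $\mathfrak{q}\pm\sqrt{\langle\mathfrak{q},\mathfrak{q}\rangle}\mathfrak{p}$, spherical if $<0$); its isometries are compositions of M-inversions (inversions $x\mapsto x-\frac{2\langle x,\mathfrak{a}\rangle}{\langle\mathfrak{a},\mathfrak{a}\rangle}\mathfrak{a}$ with $\mathfrak{a}\perp\mathfrak{p}$) fixing $\mathfrak{q}$. A discrete curve $f$ (map from consecutive integers to points) has constant arc-length in $\mathcal{Q}$ if the $\mathcal{Q}$-distance between consecutive points is constant. It is regular if any three consecutive points are pairwise distinct, in the hyperbolic case all points lie on the same side of the boundary, and in the spherical case consecutive points are not antipodal. $\mathcal{P}^\pm_j:=\{\mathfrak{f}_{j-1},\mathfrak{f}_{j+1}\}^\perp\cap\mathcal{L}$ (circles through $f_{j-1},f_{j+1}$); a circle congruence $a\in\mathcal{P}^\pm$ chooses $a_j$ in this pencil at each vertex. *)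

theory Defs
  imports "HOL-Analysis.Analysis"
begin

text \<open>The model space R^{3,2}: real^5 with the symmetric bilinear form of signature (3,2).\<close>

definition lf :: "real^5 \<Rightarrow> real^5 \<Rightarrow> real" where
  "lf x y = x$1 * y$1 + x$2 * y$2 + x$3 * y$3 - x$4 * y$4 - x$5 * y$5"

text \<open>Light cone (nonzero null vectors; lines through them are the elements of Lie geometry).\<close>
definition lightlike :: "real^5 \<Rightarrow> bool" where
  "lightlike x \<longleftrightarrow> x \<noteq> 0 \<and> lf x x = 0"

text \<open>Homogeneous coordinates of a point of R^2 \<union> {\<infinity>}: null vector orthogonal to p.\<close>
definition is_point :: "real^5 \<Rightarrow> real^5 \<Rightarrow> bool" where
  "is_point p x \<longleftrightarrow> lightlike x \<and> lf x p = 0"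

definition same_elem :: "real^5 \<Rightarrow> real^5 \<Rightarrow> bool" where
  "same_elem x y \<longleftrightarrow> (\<exists>c::real. x = c *\<^sub>R y)"

text \<open>Normalised lift into the space form Q = {y null, y \<perp> p, <y,q> = -1}.\<close>
definition nlift :: "real^5 \<Rightarrow> real^5 \<Rightarrow> real^5" where
  "nlift q x = (- 1 / lf x q) *\<^sub>R x"

text \<open>Distance in the space form Q of constant curvature kappa = - <q,q> between the points
  represented by x and y (assumed to lie in Q, i.e. <x,q> and <y,q> nonzero):
  for normalised lifts one has <x^,y^> = -(1 - cos(sqrt kappa d))/kappa, with the
  Euclidean limit <x^,y^> = - d^2/2 and the hyperbolic version <x^,y^> = (1 - cosh(sqrt(-kappa) d))/(-kappa).\<close>
definition Qdist :: "real^5 \<Rightarrow> real^5 \<Rightarrow> real^5 \<Rightarrow> real" where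
  "Qdist q x y =
     (let \<kappa> = - lf q q; c = lf (nlift q x) (nlift q y) in
      if \<kappa> = 0 then sqrt (- 2 * c)
      else if \<kappa> > 0 then arccos (1 + \<kappa> * c) / sqrt \<kappa>
      else arcosh (1 + \<kappa> * c) / sqrt (- \<kappa>))"

text \<open>Two points lie on the same side of the boundary q \<plusminus> sqrt<q,q> p of a hyperbolic space form
  (homogeneous, lift-independent formulation).\<close>
definition same_side :: "real^5 \<Rightarrow> real^5 \<Rightarrow> real^5 \<Rightarrow> bool" where
  "same_side q x y \<longleftrightarrow> lf x y * (lf x q * lf y q) \<le> 0"

text \<open>Antipodal points of a spherical space form: the antipode of the normalised lift x^ is
  -2q/<q,q> - x^.\<close>
definition antipodal :: "real^5 \<Rightarrow> real^5 \<Rightarrow> real^5 \<Rightarrow> bool" where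
  "antipodal q x y \<longleftrightarrow> same_elem y ((- 2 / lf q q) *\<^sub>R q - nlift q x)"

definition consecutive_ints :: "int set \<Rightarrow> bool" where
  "consecutive_ints I \<longleftrightarrow> (\<forall>a b c. a \<in> I \<longrightarrow> c \<in> I \<longrightarrow> a \<le> b \<longrightarrow> b \<le> c \<longrightarrow> b \<in> I)"

definition discrete_curve :: "real^5 \<Rightarrow> int set \<Rightarrow> (int \<Rightarrow> real^5) \<Rightarrow> bool" where
  "discrete_curve p I F \<longleftrightarrow> consecutive_ints I \<and> (\<forall>j\<in>I. is_point p (F j))"

definition regular_curve :: "real^5 \<Rightarrow> real^5 \<Rightarrow> int set \<Rightarrow> (int \<Rightarrow> real^5) \<Rightarrow> bool" where
  "regular_curve p q I F \<longleftrightarrow>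
     discrete_curve p I F \<and>
     (\<forall>j. j - 1 \<in> I \<and> j \<in> I \<and> j + 1 \<in> I \<longrightarrow>
        \<not> same_elem (F (j - 1)) (F j) \<and> \<not> same_elem (F j) (F (j + 1)) \<and>
        \<not> same_elem (F (j - 1)) (F (j + 1))) \<and>
     (lf q q > 0 \<longrightarrow> (\<forall>i\<in>I. \<forall>j\<in>I. same_side q (F i) (F j))) \<and>
     (lf q q < 0 \<longrightarrow> (\<forall>j. j \<in> I \<and> j + 1 \<in> I \<longrightarrow> \<not> antipodal q (F j) (F (j + 1))))"

definition const_arclength :: "real^5 \<Rightarrow> int set \<Rightarrow> (int \<Rightarrow> real^5) \<Rightarrow> bool" where
  "const_arclength q I F \<longleftrightarrow>
     (\<exists>d. \<forall>j. j \<in> I \<and> j + 1 \<in> I \<longrightarrow> Qdist q (F j) (F (j + 1)) = d)"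

text \<open>Pencil P_j of circles through f_{j-1}, f_{j+1}.\<close>
definition pencil :: "(int \<Rightarrow> real^5) \<Rightarrow> int \<Rightarrow> (real^5) set" where
  "pencil F j = {a. lightlike a \<and> lf a (F (j - 1)) = 0 \<and> lf a (F (j + 1)) = 0}"

end

theory Submission imports Defs begin

lemma lf_sym: "lf x y = lf y x" by (simp add: lf_def algebra_simps)
lemma lf_add1: "lf (x + y) z = lf x z + lf y z" by (simp add: lf_def algebra_simps)
lemma lf_diff1: "lf (x - y) z = lf x z - lf y z" by (simp add: lf_def algebra_simps)
lemma lf_scale1: "lf (c *\<^sub>R x) z = c *  lf x z" by (simp add: lf_def algebra_simps)
lemma lf_add2: "lf z (x + y) = lf z x + lf z y" by (simp add: lf_def algebra_simps)
lemma lf_diff2: "lf z (x - y) = lf z x - lf z y" by (simp add: lf_def algebra_simps)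
lemma lf_scale2: "lf z (c *\<^sub>R x) = c *  lf z x" by (simp add: lf_def algebra_simps)
lemma lf_neg1: "lf (- x) z = - lf x z" by (simp add: lf_def algebra_simps)
lemma lf_neg2: "lf z (- x) = - lf z x" by (simp add: lf_def algebra_simps)
lemma lf_zero1[simp]: "lf 0 z = 0" by (simp add: lf_def)
lemma lf_zero2[simp]: "lf z 0 = 0" by (simp add: lf_def)
lemmas lf_lin = lf_add1 lf_diff1 lf_scale1 lf_add2 lf_diff2 lf_scale2

lemma lf_45: "v$4 = 0 \<Longrightarrow> v$5 = 0 \<Longrightarrow> lf v v = (v$1)^2 + (v$2)^2 + (v$3)^2"
  by (simp add: lf_def power2_eq_square)

lemma exhaust_5':
  fixes x :: 5
  shows "x = 1 \<or> x = 2 \<or> x = 3 \<or> x = 4 \<or> x = 5"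
proof (induct x)
  case (of_int z)
  then have "z = 0 \<or> z = 1 \<or> z = 2 \<or> z = 3 \<or> z = 4" by fastforce
  moreover have e: "(of_int 0 :: 5) = 5" "(of_int 1 :: 5) = 1" "(of_int 2 :: 5) = 2" "(of_int 3 :: 5) = 3" "(of_int 4 :: 5) = 4"
    by simp_all
  ultimately show ?case by (elim disjE) (simp_all only: e simp_thms)
qed

lemma vec5_eqI: "v$1 = 0 \<Longrightarrow> v$2 = 0 \<Longrightarrow> v$3 = 0 \<Longrightarrow> v$4 = 0 \<Longrightarrow> v$5 = 0 \<Longrightarrow> v = (0::real^5)"
proof -
  assume h: "v$1 = 0" "v$2 = 0" "v$3 = 0" "v$4 = 0" "v$5 = 0"
  have "\<forall>i::5. v$i = 0"
  proof
    fix i :: 5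
    show "v$i = 0" using h exhaust_5'[of i] by (elim disjE) simp_all
  qed
  then show ?thesis by (simp add: vec_eq_iff)
qed

lemma kern23:
  fixes r1 r2 r3 s1 s2 s3 :: real
  shows "\<exists>a b c. (a,b,c) \<noteq> (0,0,0) \<and> a * r1 + b * r2 + c * r3 = 0 \<and> a * s1 + b * s2 + c * s3 = 0"
proof (cases "r2 * s3 - r3 * s2 = 0 \<and> r3 * s1 - r1 * s3 = 0 \<and> r1 * s2 - r2 * s1 = 0")
  case False
  have "(r2 * s3 - r3 * s2) * r1 + (r3 * s1 - r1 * s3) * r2 + (r1 * s2 - r2 * s1) * r3 = 0"
       "(r2 * s3 - r3 * s2) * s1 + (r3 * s1 - r1 * s3) * s2 + (r1 * s2 - r2 * s1) * s3 = 0"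
    by (simp_all add: algebra_simps)
  moreover have "(r2 * s3 - r3 * s2, r3 * s1 - r1 * s3, r1 * s2 - r2 * s1) \<noteq> (0,0,0)" using False by simp
  ultimately show ?thesis by blast
next
  case x0: True
  hence e: "r1 * s2 - r2 * s1 = 0" by simp
  show ?thesis
  proof (cases "r2 = 0 \<and> r1 = 0")
    case False
    have "r2 * r1 + (- r1) * r2 + 0 * r3 = 0" by simp
    moreover have "r2 * s1 + (- r1) * s2 + 0 * s3 = - (r1 * s2 - r2 * s1)" by simp
    hence "r2 * s1 + (- r1) * s2 + 0 * s3 = 0" using e by simp
    moreover have "(r2, - r1, 0::real) \<noteq> (0,0,0)" using False by simp
    ultimately show ?thesis by blast
  next
    case T: True
    show ?thesis
    proof (cases "s2 = 0 \<and> s1 = 0")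
      case False
      have "s2 * r1 + (- s1) * r2 + 0 * r3 = 0" using T by simp
      moreover have "s2 * s1 + (- s1) * s2 + 0 * s3 = 0" by simp
      moreover have "(s2, - s1, 0::real) \<noteq> (0,0,0)" using False by simp
      ultimately show ?thesis by blast
    next
      case True
      have "1 * r1 + 0 * r2 + 0 * r3 = 0" "1 * s1 + 0 * s2 + 0 * s3 = 0" using T True by simp_all
      moreover have "(1::real, 0::real, 0::real) \<noteq> (0,0,0)" by simp
      ultimately show ?thesis by blast
    qed
  qed
qed

lemma no_neg3:
  assumes "lf u v = 0" "lf u w = 0" "lf v w = 0" "lf u u < 0" "lf v v < 0" "lf w w \<le> 0" "w \<noteq> 0"
  shows False
proof -
  obtain a b c where abc: "(a,b,c) \<noteq> (0,0,0)" "a * u$4 + b * v$4 + c * w$4 = 0" "a * u$5 + b * v$5 + c * w$5 = 0"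
    using kern23[of "u$4" "v$4" "w$4" "u$5" "v$5" "w$5"] by blast
  define z where "z = a *\<^sub>R u + b *\<^sub>R v + c *\<^sub>R w"
  have z45: "z$4 = 0" "z$5 = 0" using abc by (auto simp: z_def)
  have "lf z z = a*(a*lf u u + b*lf v u + c*lf w u) + b*(a*lf u v + b*lf v v + c*lf w v)
       + c*(a*lf u w + b*lf v w + c*lf w w)"
    unfolding z_def by (simp only: lf_add1 lf_add2 lf_scale1 lf_scale2 distrib_left)
  also have "\<dots> = a^2 * lf u u + b^2 * lf v v + c^2 * lf w w"
    using assms(1-3) by (simp add: lf_sym[of v u] lf_sym[of w u] lf_sym[of w v] power2_eq_square)
  finally have zz: "lf z z = a^2 * lf u u + b^2 * lf v v + c^2 * lf w w" .
  have s3: "lf z z = (z$1)^2 + (z$2)^2 + (z$3)^2" using lf_45[OF z45] .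
  have "a^2 * lf u u \<le> 0" "b^2 * lf v v \<le> 0" "c^2 * lf w w \<le> 0"
    using assms by (auto simp: mult_nonneg_nonpos)
  moreover have "(z$1)^2 \<ge> 0" "(z$2)^2 \<ge> 0" "(z$3)^2 \<ge> 0" by simp_all
  ultimately have e: "a^2 * lf u u = 0" "b^2 * lf v v = 0" "(z$1)^2 = 0" "(z$2)^2 = 0" "(z$3)^2 = 0"
    using zz s3 by linarith+
  hence ab: "a = 0" "b = 0" using assms by auto
  have "z = 0" using e(3-5) z45 by (intro vec5_eqI) simp_all
  hence "c *\<^sub>R w = 0" using ab by (simp add: z_def)
  hence "c = 0" using assms by simp
  thus False using ab abc by simp
qed


lemma nlift_lf: "lf (nlift q x) (nlift q y) = lf x y / (lf x q * lf y q)"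
  by (simp add: nlift_def lf_lin lf_neg1 lf_neg2)

definition gQ :: "real \<Rightarrow> real \<Rightarrow> real" where
  "gQ k c = (if k = 0 then sqrt (- 2 * c)
      else if k > 0 then arccos (1 + k * c) / sqrt k
      else arcosh (1 + k * c) / sqrt (- k))"

lemma Qdist_eq: "Qdist q x y = gQ (- lf q q) (lf x y / (lf x q * lf y q))"
  by (simp add: Qdist_def Let_def nlift_lf gQ_def)

lemma gQ_inj:
  assumes "c1 \<le> 0" "2 + k * c1 \<ge> 0" "c2 \<le> 0" "2 + k * c2 \<ge> 0" "gQ k c1 = gQ k c2"
  shows "c1 = c2"
proof (cases "k = 0")
  case True
  then show ?thesis using assms(5) by (simp add: gQ_def)
next
  case k0: False
  show ?thesis
  proof (cases "k > 0")
    case True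
    have "k * c1 \<le> 0" "k * c2 \<le> 0" using True assms by (auto simp: mult_nonneg_nonpos)
    moreover have "arccos (1 + k * c1) = arccos (1 + k * c2)"
      using assms(5) True by (simp add: gQ_def)
    hence "cos (arccos (1 + k * c1)) = cos (arccos (1 + k * c2))" by simp
    ultimately have "1 + k * c1 = 1 + k * c2" using assms by simp
    then show ?thesis using k0 by simp
  next
    case False
    hence kn: "k < 0" using k0 by simp
    have "k * c1 \<ge> 0" "k * c2 \<ge> 0" using kn assms by (auto simp: mult_nonpos_nonpos)
    moreover have "arcosh (1 + k * c1) = arcosh (1 + k * c2)"
      using assms(5) kn by (simp add: gQ_def)
    hence "cosh (arcosh (1 + k * c1)) = cosh (arcosh (1 + k * c2))" by simp
    ultimately have "1 + k * c1 = 1 + k * c2" by simp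
    then show ?thesis using k0 by simp
  qed
qed


lemma nlift_props:
  assumes "is_point p x" "lf x q \<noteq> 0"
  shows "lf (nlift q x) (nlift q x) = 0" "lf (nlift q x) p = 0" "lf (nlift q x) q = -1"
proof -
  have "lf x x = 0" "lf x p = 0" using assms(1) by (auto simp: is_point_def lightlike_def)
  then show "lf (nlift q x) (nlift q x) = 0" "lf (nlift q x) p = 0" "lf (nlift q x) q = -1"
    using assms(2) by (simp_all add: nlift_lf nlift_def lf_scale1 lf_scale2 lf_neg1 lf_neg2)
qed

lemma range_c:
  assumes hp: "lf p p = -1" and hq0: "q \<noteq> 0" and hqp: "lf q p = 0"
    and x: "is_point p x" and y: "is_point p y" and xq: "lf x q \<noteq> 0" and yq: "lf y q \<noteq> 0"
    and ss: "lf q q > 0 \<Longrightarrow> lf x y * (lf x q * lf y q) \<le> 0"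
  shows "lf x y / (lf x q * lf y q) \<le> 0 \<and> 2 + (- lf q q) * (lf x y / (lf x q * lf y q)) \<ge> 0"
proof -
  define c where "c = lf x y / (lf x q * lf y q)"
  define X where "X = nlift q x"
  define Y where "Y = nlift q y"
  have X: "lf X X = 0" "lf X p = 0" "lf X q = -1" using nlift_props[OF x xq] by (simp_all add: X_def)
  have Y: "lf Y Y = 0" "lf Y p = 0" "lf Y q = -1" using nlift_props[OF y yq] by (simp_all add: Y_def)
  have XY: "lf X Y = c" "lf Y X = c" using nlift_lf[of q x y] nlift_lf[of q y x]
    by (simp_all add: X_def Y_def c_def lf_sym[of x y] mult.commute)
  have pq: "lf p q = 0" using hqp lf_sym by metis
  show ?thesis
  proof (cases "lf q q > 0")
    case True
    have P: "lf x q * lf y q \<noteq> 0" using xq yq by simp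
    have "c = (lf x y * (lf x q * lf y q)) / (lf x q * lf y q)^2"
      using P by (simp add: c_def power2_eq_square)
    moreover have "(lf x q * lf y q)^2 > 0" using P by simp
    ultimately have "c \<le> 0" using ss[OF True] by (simp add: divide_nonpos_pos)
    moreover have "lf q q * c \<le> 0" using mult_nonneg_nonpos[of "lf q q" c] True \<open>c \<le> 0\<close> by simp
    hence "(- lf q q) * c \<ge> 0" by simp
    ultimately show ?thesis by (simp add: c_def[symmetric])
  next
    case False
    define w where "w = X - Y"
    have ww: "lf w w = - 2 * c" using X Y XY by (simp add: w_def lf_lin)
    have o1: "lf p w = 0" "lf w q = 0" using X Y by (simp_all add: w_def lf_lin lf_sym[of p])
    have pp: "lf p p < 0" using hp by simp
    have qq: "lf q q \<le> 0" using False by simp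
    have "\<not> lf w w < 0"
    proof
      assume "lf w w < 0"
      from no_neg3[OF o1(1) pq o1(2) pp this qq hq0] show False .
    qed
    hence c0: "c \<le> 0" using ww by simp
    show ?thesis
    proof (cases "lf q q = 0")
      case True
      then show ?thesis using c0 by (simp add: c_def[symmetric])
    next
      case qn: False
      hence qneg: "lf q q < 0" using False by simp
      define w' where "w' = X + Y + (2 / lf q q) *\<^sub>R q"
      have ww': "lf w' w' = 2 * c - 4 / lf q q"
        unfolding w'_def apply (simp only: lf_add1 lf_add2 lf_scale1 lf_scale2)
        using X Y XY qn apply (simp add: lf_sym[of q X] lf_sym[of q Y])
        done
      have o2: "lf p w' = 0" "lf w' q = 0" using X Y qn
        by (simp_all add: w'_def lf_lin lf_sym[of p] pq hqp)
      have "\<not> lf w' w' < 0"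
      proof
        assume "lf w' w' < 0"
        from no_neg3[OF o2(1) pq o2(2) pp this qq hq0] show False .
      qed
      hence "2 * c - 4 / lf q q \<ge> 0" using ww' by simp
      hence "(2 * c - 4 / lf q q) * (- lf q q) \<ge> 0" using qneg by (intro mult_nonneg_nonneg) simp_all
      hence "2 * (2 + (- lf q q) * c) \<ge> 0" using qn by (simp add: algebra_simps)
      then show ?thesis using c0 by (simp add: c_def[symmetric] mult.commute)
    qed
  qed
qed

lemma chain_const:
  fixes g :: "int \<Rightarrow> real"
  assumes cons: "consecutive_ints I"
    and step: "\<And>j. j - 1 \<in> I \<Longrightarrow> j \<in> I \<Longrightarrow> j + 1 \<in> I \<Longrightarrow> g (j - 1) = g j"
    and j0: "j0 \<in> I" "j0 + 1 \<in> I"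
  shows "k \<in> I \<Longrightarrow> k + 1 \<in> I \<Longrightarrow> g k = g j0"
proof -
  have cI: "\<And>a b c. a \<in> I \<Longrightarrow> c \<in> I \<Longrightarrow> a \<le> b \<Longrightarrow> b \<le> c \<Longrightarrow> b \<in> I"
    using cons unfolding consecutive_ints_def by blast
  have up: "\<And>n::nat. j0 + int n \<in> I \<Longrightarrow> j0 + int n + 1 \<in> I \<Longrightarrow> g (j0 + int n) = g j0"
  proof -
    fix n :: nat
    show "j0 + int n \<in> I \<Longrightarrow> j0 + int n + 1 \<in> I \<Longrightarrow> g (j0 + int n) = g j0"
    proof (induction n)
      case 0 then show ?case by simp
    next
      case (Suc n)
      have a: "j0 + int n \<in> I" using cI[OF j0(1) Suc.prems(1), of "j0 + int n"] by simp
      have b: "j0 + int n + 1 \<in> I" using Suc.prems(1) by (simp add: algebra_simps)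
      have "g (j0 + int n) = g j0" using Suc.IH a b by simp
      moreover have "g (j0 + int (Suc n) - 1) = g (j0 + int (Suc n))"
        using step[of "j0 + int (Suc n)"] a Suc.prems by simp
      ultimately show ?case by simp
    qed
  qed
  have down: "\<And>n::nat. j0 - int n \<in> I \<Longrightarrow> j0 - int n + 1 \<in> I \<Longrightarrow> g (j0 - int n) = g j0"
  proof -
    fix n :: nat
    show "j0 - int n \<in> I \<Longrightarrow> j0 - int n + 1 \<in> I \<Longrightarrow> g (j0 - int n) = g j0"
    proof (induction n)
      case 0 then show ?case by simp
    next
      case (Suc n)
      have a: "j0 - int n \<in> I" using Suc.prems(2) by simp
      have b: "j0 - int n + 1 \<in> I" using cI[OF Suc.prems(1) j0(2), of "j0 - int n + 1"] by simp
      have "g (j0 - int n) = g j0" using Suc.IH a b by simp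
      moreover have "g (j0 - int n - 1) = g (j0 - int n)"
        using step[of "j0 - int n"] a b Suc.prems by (simp add: algebra_simps)
      moreover have "j0 - int (Suc n) = j0 - int n - 1" by simp
      ultimately show ?case by metis
    qed
  qed
  assume k: "k \<in> I" "k + 1 \<in> I"
  show "g k = g j0"
  proof (cases "k \<ge> j0")
    case True
    hence "k = j0 + int (nat (k - j0))" by simp
    then show ?thesis using up[of "nat (k - j0)"] k by simp
  next
    case False
    hence "k = j0 - int (nat (j0 - k))" by simp
    then show ?thesis using down[of "nat (j0 - k)"] k by simp
  qed
qed


lemma vert:
  assumes hp: "lf p p = -1" and hqp: "lf q p = 0"
    and x: "is_point p x" and y: "is_point p y" and z: "is_point p z"
    and xq: "lf x q \<noteq> 0" and yq: "lf y q \<noteq> 0" and zq: "lf z q \<noteq> 0"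
    and rc: "lf x y / (lf x q * lf y q) \<le> 0" "2 + (- lf q q) * (lf x y / (lf x q * lf y q)) \<ge> 0"
  shows "lf (lf z y *\<^sub>R x - lf x y *\<^sub>R z) q = 0 \<longleftrightarrow>
     (\<exists>a. lightlike a \<and> lf a x = 0 \<and> lf a z = 0 \<and> a \<in> span {y, q, p})"
proof -
  have yy: "lf y y = 0" and px: "lf p x = 0" and py: "lf p y = 0" and pz: "lf p z = 0"
    and yp: "lf y p = 0"
    using x y z by (auto simp: is_point_def lightlike_def lf_sym[of p])
  have pq: "lf p q = 0" using hqp lf_sym by metis
  define A where "A = lf y x"
  define B where "B = lf q x"
  define C where "C = lf y q"
  define A' where "A' = lf y z"
  define B' where "B' = lf q z"
  define Q where "Q = lf q q"
  have B0: "B \<noteq> 0" using xq by (simp add: B_def lf_sym[of q x])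
  have C0: "C \<noteq> 0" using yq by (simp add: C_def)
  have qy: "lf q y = C" by (simp add: C_def lf_sym[of q y])
  have E: "lf (lf z y *\<^sub>R x - lf x y *\<^sub>R z) q = A' * B - A * B'"
    by (simp add: lf_diff1 lf_scale1 A_def B_def A'_def B'_def lf_sym[of z y] lf_sym[of x q]
        lf_sym[of x y] lf_sym[of z q])
  show ?thesis
  proof
    assume "lf (lf z y *\<^sub>R x - lf x y *\<^sub>R z) q = 0"
    hence E0: "A' * B - A * B' = 0" using E by simp
    define c where "c = lf x y / (lf x q * lf y q)"
    have cA: "c = A / (B * C)"
      by (simp add: c_def A_def B_def C_def lf_sym[of x y] lf_sym[of x q])
    have Aeq: "A = c * (B * C)" using cA B0 C0 by simp
    define disc where "disc = A^2 * Q - 2 * A * B * C"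
    have "disc = (B * C)^2 * ((- c) * (2 + (- Q) * c))"
      by (simp add: disc_def Aeq power2_eq_square algebra_simps)
    moreover have "(- c) * (2 + (- Q) * c) \<ge> 0"
      using rc by (intro mult_nonneg_nonneg) (simp_all add: c_def[symmetric] Q_def)
    hence "(B * C)^2 * ((- c) * (2 + (- Q) * c)) \<ge> 0" by (rule mult_nonneg_nonneg[OF zero_le_power2])
    ultimately have d0: "disc \<ge> 0" by linarith
    define s where "s = sqrt disc"
    have ss: "s * s = disc" using d0 by (simp add: s_def)
    define a where "a = B *\<^sub>R y + (- A) *\<^sub>R q + s *\<^sub>R p"
    have aa: "lf a a = 0"
    proof -
      have "lf a a = B * (B * lf y y + - A * lf q y + s * lf p y)
          + - A * (B * lf y q + - A * lf q q + s * lf p q)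
          + s * (B * lf y p + - A * lf q p + s * lf p p)"
        unfolding a_def by (simp only: lf_add1 lf_add2 lf_scale1 lf_scale2 distrib_left)
      also have "\<dots> = disc - s * s"
        by (simp add: yy qy py pq yp hqp hp disc_def Q_def C_def power2_eq_square algebra_simps)
      finally show ?thesis using ss by simp
    qed
    have ax: "lf a x = 0"
      by (simp add: a_def lf_add1 lf_diff1 lf_scale1 px A_def B_def mult.commute)
    have az: "lf a z = 0" using E0
      by (simp add: a_def lf_add1 lf_diff1 lf_scale1 pz A'_def B'_def algebra_simps)
    have a0: "a \<noteq> 0"
    proof
      assume "a = 0"
      hence "lf a y = 0" "lf a q = 0" by simp_all
      moreover have "lf a y = - A * C" by (simp add: a_def lf_add1 lf_diff1 lf_scale1 yy qy py)
      moreover have "lf a q = B * C - A * Q" by (simp add: a_def lf_add1 lf_diff1 lf_scale1 pq C_def Q_def)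
      ultimately show False using B0 C0 by simp
    qed
    have "a \<in> span {y, q, p}" unfolding a_def
      by (intro span_add span_scale span_base) auto
    thus "\<exists>a. lightlike a \<and> lf a x = 0 \<and> lf a z = 0 \<and> a \<in> span {y, q, p}"
      using aa ax az a0 by (auto simp: lightlike_def)
  next
    assume "\<exists>a. lightlike a \<and> lf a x = 0 \<and> lf a z = 0 \<and> a \<in> span {y, q, p}"
    then obtain a where la: "lightlike a" and ax: "lf a x = 0" and az: "lf a z = 0"
      and sp: "a \<in> span {y, q, p}" by blast
    obtain \<alpha> where h1: "a - \<alpha> *\<^sub>R y \<in> span {q, p}" using sp by (auto simp: span_insert)
    obtain \<beta> where h2: "a - \<alpha> *\<^sub>R y - \<beta> *\<^sub>R q \<in> span {p}" using h1 by (auto simp: span_insert)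
    obtain \<gamma> where h3: "a - \<alpha> *\<^sub>R y - \<beta> *\<^sub>R q = \<gamma> *\<^sub>R p" using h2 by (auto simp: span_singleton)
    have aeq: "a = \<alpha> *\<^sub>R y + \<beta> *\<^sub>R q + \<gamma> *\<^sub>R p" using h3 by (simp add: algebra_simps)
    have e1: "\<alpha> * A + \<beta> * B = 0" using ax by (simp add: aeq lf_add1 lf_scale1 px A_def B_def)
    have e2: "\<alpha> * A' + \<beta> * B' = 0" using az by (simp add: aeq lf_add1 lf_scale1 pz A'_def B'_def)
    have "A' * B - A * B' = 0"
    proof (cases "\<alpha> = 0 \<and> \<beta> = 0")
      case True
      hence "a = \<gamma> *\<^sub>R p" using aeq by simp
      hence "lf a a = - (\<gamma> * \<gamma>)" by (simp add: lf_scale1 lf_scale2 hp)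
      hence "\<gamma> = 0" using la by (simp add: lightlike_def)
      hence "a = 0" using \<open>a = \<gamma> *\<^sub>R p\<close> by simp
      then show ?thesis using la by (simp add: lightlike_def)
    next
      case False
      have r1: "\<alpha> * (A' * B - A * B') = B * (\<alpha> * A') - B' * (\<alpha> * A)" by (simp add: algebra_simps)
      also have "\<dots> = B * (- (\<beta> * B')) - B' * (- (\<beta> * B))"
      proof -
        have u1: "\<alpha> * A = - (\<beta> * B)" "\<alpha> * A' = - (\<beta> * B')" using e1 e2 by linarith+
        show ?thesis by (simp only: u1)
      qed
      also have "\<dots> = 0" by (simp add: algebra_simps)
      finally have f1: "\<alpha> * (A' * B - A * B') = 0" .
      have "\<beta> * (A' * B - A * B') = A' * (\<beta> * B) - A * (\<beta> * B')" by (simp add: algebra_simps)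
      also have "\<dots> = A' * (- (\<alpha> * A)) - A * (- (\<alpha> * A'))"
      proof -
        have u2: "\<beta> * B = - (\<alpha> * A)" "\<beta> * B' = - (\<alpha> * A')" using e1 e2 by linarith+
        show ?thesis by (simp only: u2)
      qed
      also have "\<dots> = 0" by (simp add: algebra_simps)
      finally have f2: "\<beta> * (A' * B - A * B') = 0" .
      show ?thesis using False f1 f2 by auto
    qed
    thus "lf (lf z y *\<^sub>R x - lf x y *\<^sub>R z) q = 0" using E by simp
  qed
qed

theorem lemma3p12:
  fixes p q :: "real^5" and I :: "int set" and F :: "int \<Rightarrow> real^5"
  assumes hp: "lf p p = -1"
    and hq0: "q \<noteq> 0" and hqp: "lf q p = 0"
    and hreg: "regular_curve p q I F"
    and hQ: "\<forall>j\<in>I. lf (F j) q \<noteq> 0"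
  shows "(const_arclength q I F
          \<longleftrightarrow> (\<forall>j. j - 1 \<in> I \<and> j \<in> I \<and> j + 1 \<in> I \<longrightarrow>
                 lf ((lf (F (j + 1)) (F j)) *\<^sub>R F (j - 1) - (lf (F (j - 1)) (F j)) *\<^sub>R F (j + 1)) q = 0))
       \<and> (const_arclength q I F
          \<longleftrightarrow> (\<exists>chi::real. \<forall>j. j \<in> I \<and> j + 1 \<in> I \<longrightarrow>
                 lf (F j) (F (j + 1)) / (lf (F j) q * lf (F (j + 1)) q) = chi))
       \<and> (const_arclength q I F
          \<longleftrightarrow> (\<exists>a :: int \<Rightarrow> (real^5). \<forall>j. j - 1 \<in> I \<and> j \<in> I \<and> j + 1 \<in> I \<longrightarrow>
                 a j \<in> pencil F j \<and> a j \<in> span {F j, q, p}))"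
proof -
  have dc: "discrete_curve p I F" using hreg unfolding regular_curve_def by blast
  have cons: "consecutive_ints I" using dc unfolding discrete_curve_def by blast
  have pts: "\<And>j. j \<in> I \<Longrightarrow> is_point p (F j)" using dc unfolding discrete_curve_def by blast
  have ssd: "\<And>i j. lf q q > 0 \<Longrightarrow> i \<in> I \<Longrightarrow> j \<in> I \<Longrightarrow> lf (F i) (F j) * (lf (F i) q * lf (F j) q) \<le> 0"
    using hreg unfolding regular_curve_def same_side_def by blast
  have hQ': "\<And>j. j \<in> I \<Longrightarrow> lf (F j) q \<noteq> 0" using hQ by blast
  define cc where "cc j = lf (F j) (F (j + 1)) / (lf (F j) q * lf (F (j + 1)) q)" for j
  have R: "cc j \<le> 0 \<and> 2 + (- lf q q) * cc j \<ge> 0" if j: "j \<in> I" "j + 1 \<in> I" for j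
    unfolding cc_def
    by (rule range_c[OF hp hq0 hqp pts[OF j(1)] pts[OF j(2)] hQ'[OF j(1)] hQ'[OF j(2)] ssd[OF _ j]])
  have A1: "const_arclength q I F \<longleftrightarrow> (\<exists>chi. \<forall>j. j \<in> I \<and> j + 1 \<in> I \<longrightarrow> cc j = chi)"
  proof
    assume "const_arclength q I F"
    then obtain d where d: "\<forall>j. j \<in> I \<and> j + 1 \<in> I \<longrightarrow> gQ (- lf q q) (cc j) = d"
      unfolding const_arclength_def Qdist_eq cc_def by blast
    show "\<exists>chi. \<forall>j. j \<in> I \<and> j + 1 \<in> I \<longrightarrow> cc j = chi"
    proof (cases "\<exists>j0. j0 \<in> I \<and> j0 + 1 \<in> I")
      case True
      then obtain j0 where j0: "j0 \<in> I" "j0 + 1 \<in> I" by blast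
      have "cc j = cc j0" if j: "j \<in> I" "j + 1 \<in> I" for j
      proof -
        have "gQ (- lf q q) (cc j) = gQ (- lf q q) (cc j0)" using d j j0 by simp
        thus ?thesis using R[OF j] R[OF j0] gQ_inj by blast
      qed
      thus ?thesis by blast
    next
      case False
      then show ?thesis by blast
    qed
  next
    assume "\<exists>chi. \<forall>j. j \<in> I \<and> j + 1 \<in> I \<longrightarrow> cc j = chi"
    then obtain chi where chi: "\<forall>j. j \<in> I \<and> j + 1 \<in> I \<longrightarrow> cc j = chi" by blast
    show "const_arclength q I F"
      unfolding const_arclength_def Qdist_eq
      by (rule exI[of _ "gQ (- lf q q) chi"]) (use chi in \<open>auto simp: cc_def\<close>)
  qed
  define E where "E j = lf ((lf (F (j + 1)) (F j)) *\<^sub>R F (j - 1) - (lf (F (j - 1)) (F j)) *\<^sub>R F (j + 1)) q" for j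
  have V: "E j = 0 \<longleftrightarrow> cc (j - 1) = cc j" if j: "j - 1 \<in> I" "j \<in> I" "j + 1 \<in> I" for j
  proof -
    define x where "x = F (j - 1)"
    define y where "y = F j"
    define z where "z = F (j + 1)"
    have xq: "lf x q \<noteq> 0" "lf y q \<noteq> 0" "lf z q \<noteq> 0" using hQ' j by (auto simp: x_def y_def z_def)
    have e: "E j = lf z y * lf x q - lf x y * lf z q"
      by (simp add: E_def x_def y_def z_def lf_diff1 lf_scale1)
    have c1: "cc (j - 1) = lf x y / (lf x q * lf y q)" by (simp add: cc_def x_def y_def)
    have c2: "cc j = lf y z / (lf y q * lf z q)" by (simp add: cc_def y_def z_def)
    have "cc (j - 1) = cc j \<longleftrightarrow> lf x y * (lf y q * lf z q) = lf y z * (lf x q * lf y q)"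
      unfolding c1 c2 using xq by (simp add: frac_eq_eq)
    also have "\<dots> \<longleftrightarrow> lf y q * (lf x y * lf z q) = lf y q * (lf y z * lf x q)"
      by (simp add: algebra_simps)
    also have "\<dots> \<longleftrightarrow> lf x y * lf z q = lf y z * lf x q" using xq by simp
    also have "\<dots> \<longleftrightarrow> E j = 0" unfolding e by (simp add: lf_sym[of z y]) (simp add: eq_commute)
    finally show ?thesis by simp
  qed
  have A2: "(\<forall>j. j - 1 \<in> I \<and> j \<in> I \<and> j + 1 \<in> I \<longrightarrow> E j = 0)
      \<longleftrightarrow> (\<exists>chi. \<forall>j. j \<in> I \<and> j + 1 \<in> I \<longrightarrow> cc j = chi)"
  proof
    assume h: "\<forall>j. j - 1 \<in> I \<and> j \<in> I \<and> j + 1 \<in> I \<longrightarrow> E j = 0"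
    have st: "cc (j - 1) = cc j" if "j - 1 \<in> I" "j \<in> I" "j + 1 \<in> I" for j
      using h V that by blast
    show "\<exists>chi. \<forall>j. j \<in> I \<and> j + 1 \<in> I \<longrightarrow> cc j = chi"
    proof (cases "\<exists>j0. j0 \<in> I \<and> j0 + 1 \<in> I")
      case True
      then obtain j0 where j0: "j0 \<in> I" "j0 + 1 \<in> I" by blast
      show ?thesis using chain_const[of I cc, OF cons st j0] by blast
    next
      case False
      then show ?thesis by blast
    qed
  next
    assume "\<exists>chi. \<forall>j. j \<in> I \<and> j + 1 \<in> I \<longrightarrow> cc j = chi"
    then obtain chi where chi: "\<forall>j. j \<in> I \<and> j + 1 \<in> I \<longrightarrow> cc j = chi" by blast
    show "\<forall>j. j - 1 \<in> I \<and> j \<in> I \<and> j + 1 \<in> I \<longrightarrow> E j = 0"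
    proof (intro allI impI)
      fix j assume j: "j - 1 \<in> I \<and> j \<in> I \<and> j + 1 \<in> I"
      have "cc (j - 1) = chi" using chi j by simp
      moreover have "cc j = chi" using chi j by simp
      ultimately show "E j = 0" using V j by simp
    qed
  qed
  have W: "E j = 0 \<longleftrightarrow> (\<exists>b. b \<in> pencil F j \<and> b \<in> span {F j, q, p})"
    if j: "j - 1 \<in> I" "j \<in> I" "j + 1 \<in> I" for j
  proof -
    have j': "j - 1 + 1 = j" by simp
    have r: "cc (j - 1) \<le> 0 \<and> 2 + (- lf q q) * cc (j - 1) \<ge> 0" using R[of "j - 1"] j by simp
    have "E j = 0 \<longleftrightarrow> (\<exists>b. lightlike b \<and> lf b (F (j - 1)) = 0 \<and> lf b (F (j + 1)) = 0 \<and> b \<in> span {F j, q, p})"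
      unfolding E_def
      by (rule vert[OF hp hqp pts[OF j(1)] pts[OF j(2)] pts[OF j(3)] hQ'[OF j(1)] hQ'[OF j(2)] hQ'[OF j(3)]])
         (use r in \<open>simp_all add: cc_def\<close>)
    thus ?thesis by (simp add: pencil_def)
  qed
  have A3: "(\<exists>a :: int \<Rightarrow> (real^5). \<forall>j. j - 1 \<in> I \<and> j \<in> I \<and> j + 1 \<in> I \<longrightarrow>
                 a j \<in> pencil F j \<and> a j \<in> span {F j, q, p})
       \<longleftrightarrow> (\<forall>j. j - 1 \<in> I \<and> j \<in> I \<and> j + 1 \<in> I \<longrightarrow> E j = 0)"
  proof
    assume "\<exists>a :: int \<Rightarrow> (real^5). \<forall>j. j - 1 \<in> I \<and> j \<in> I \<and> j + 1 \<in> I \<longrightarrow>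
                 a j \<in> pencil F j \<and> a j \<in> span {F j, q, p}"
    then show "\<forall>j. j - 1 \<in> I \<and> j \<in> I \<and> j + 1 \<in> I \<longrightarrow> E j = 0" using W by blast
  next
    assume h: "\<forall>j. j - 1 \<in> I \<and> j \<in> I \<and> j + 1 \<in> I \<longrightarrow> E j = 0"
    have "\<forall>j. \<exists>b. j - 1 \<in> I \<and> j \<in> I \<and> j + 1 \<in> I \<longrightarrow> b \<in> pencil F j \<and> b \<in> span {F j, q, p}"
      using h W by blast
    then show "\<exists>a :: int \<Rightarrow> (real^5). \<forall>j. j - 1 \<in> I \<and> j \<in> I \<and> j + 1 \<in> I \<longrightarrow>
                 a j \<in> pencil F j \<and> a j \<in> span {F j, q, p}"
      by (rule choice)
  qed
  show ?thesis
    using A1 A2 A3 unfolding E_def cc_def by blast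
qed

end
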